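(* Let $\ell\ge2$ be an integer and let $n$ be a positive divisor of $3^\ell+1$ with $2n>3^{\lceil \ell/2\rceil}+1$. Then $\mathrm{ord}_{2n}(3)=2\ell$.
   Context: $\mathrm{ord}_M(3)$ is the multiplicative order of $3$ modulo $M$. *)

theory Defs
  imports "HOL-Number_Theory.Number_Theory"
begin

end

theory Submission
  imports Defs
begin

theorem lemma19:
  fixes l n :: nat
  assumes "l \<ge> 2"
    and "n > 0"
    and "n dvd 3 ^ l + 1"
    and "2 * n > 3 ^ nat \<lceil>real l / 2\<rceil> + 1"
  shows "ord (2 * n) 3 = 2 * l"
proof -
  define d where "d = ord (2 * n) (3::nat)"
  define c where "c = nat \<lceil>real l / 2\<rceil>"
  have c_eq: "c = (l + 1) div 2"
    unfolding c_def by linarith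
  have key: "d dvd k \<longleftrightarrow> int (2 * n) dvd 3 ^ k - 1" for k
  proof -
    have "d dvd k \<longleftrightarrow> [3 ^ k = 1] (mod (2 * n))" unfolding d_def by (simp add: ord_divides')
    also have "\<dots> \<longleftrightarrow> [int (3 ^ k) = int 1] (mod int (2 * n))" by (rule cong_int_iff[symmetric])
    also have "\<dots> \<longleftrightarrow> int (2 * n) dvd 3 ^ k - 1" by (simp add: cong_iff_dvd_diff cong_sym_eq)
    finally show ?thesis .
  qed
  have nl: "int n dvd 3 ^ l + 1"
  proof -
    have "int n dvd int (3 ^ l + 1)" using assms(3) by (simp only: of_nat_dvd_iff)
    then show ?thesis by (simp add: add.commute)
  qed
  have "int (2 * n) dvd 3 ^ (2 * l) - 1"
  proof -
    have "(2::int) dvd 3 ^ l - 1" by simp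
    then have "int 2 * int n dvd (3 ^ l - 1) * (3 ^ l + 1)"
      using nl by (simp add: mult_dvd_mono)
    moreover have "(3::int) ^ (2 * l) - 1 = (3 ^ l - 1) * (3 ^ l + 1)"
      by (simp add: power_mult algebra_simps power2_eq_square)
    ultimately show ?thesis by simp
  qed
  then have "d dvd 2 * l" using key by blast
  then obtain k where k: "2 * l = d * k" by blast
  have dpos: "d > 0" using k assms(1) by (cases d) auto
  have nd: "int n dvd 3 ^ d - 1"
  proof -
    have "int (2 * n) dvd 3 ^ d - 1" using key[of d] by simp
    then have "2 * int n dvd 3 ^ d - 1" by simp
    then show ?thesis by (rule dvd_mult_right)
  qed
  have c1: "c \<ge> 1" using c_eq assms(1) by simp
  have "(3::nat) ^ c \<ge> 3 ^ 1" using c1 by (rule power_increasing) simp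
  show ?thesis
  proof (cases "even k")
    case True
    then obtain j where "k = 2 * j" by blast
    then have "l = d * j" using k by simp
    then have "int n dvd 3 ^ l - 1"
    proof -
      have "[(3::int) ^ d = 1] (mod int n)" using nd by (simp add: cong_iff_dvd_diff)
      then have "[((3::int) ^ d) ^ j = 1] (mod int n)" using cong_pow by fastforce
      then show ?thesis using \<open>l = d * j\<close> by (simp add: power_mult cong_iff_dvd_diff)
    qed
    with nl have "int n dvd (3 ^ l + 1) - (3 ^ l - 1)" using dvd_diff by blast
    then have "int n dvd 2" by simp
    then have "int n dvd int 2" by simp
    then have "n dvd 2" by (simp only: of_nat_dvd_iff)
    then have "n \<le> 2" by (rule dvd_imp_le) simp
    with assms(4) \<open>(3::nat) ^ c \<ge> 3 ^ 1\<close> show ?thesis unfolding c_def[symmetric] by simp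
  next
    case False
    then obtain j where kj: "k = 2 * j + 1" using oddE by blast
    show ?thesis
    proof (cases "j = 0")
      case True then show ?thesis using k kj d_def by simp
    next
      case False
      have "even (d * k)" using k by (metis dvd_triv_left)
      then have "even d" using kj by simp
      then obtain e where e: "d = 2 * e" by blast
      have le: "l = e * k" using k e by simp
      have e1: "e \<ge> 1" using dpos e by simp
      have "(3::int) ^ l = 3 ^ e * (3 ^ d) ^ j"
        unfolding le kj e by (simp add: power_add power_mult[symmetric] algebra_simps)
      have "[(3::int) ^ d = 1] (mod int n)" using nd by (simp add: cong_iff_dvd_diff)
      then have "[((3::int) ^ d) ^ j = 1] (mod int n)" using cong_pow by fastforce
      then have "[(3::int) ^ l = 3 ^ e] (mod int n)"
        using \<open>(3::int) ^ l = 3 ^ e * (3 ^ d) ^ j\<close> cong_scalar_left by fastforce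
      moreover have "[(3::int) ^ l = - 1] (mod int n)" using nl
        by (simp add: cong_iff_dvd_diff)
      ultimately have "[(3::int) ^ e = - 1] (mod int n)" by (metis cong_sym cong_trans)
      then have "int n dvd 3 ^ e + 1" by (simp add: cong_iff_dvd_diff)
      then have "int n \<le> 3 ^ e + 1" by (rule zdvd_imp_le) simp
      then have "int n \<le> int (3 ^ e + 1)" by simp
      then have nle: "n \<le> 3 ^ e + 1" by (simp only: of_nat_le_iff)
      have "k \<ge> 3" using kj False by simp
      then have "l \<ge> 3 * e" using le by simp
      then have "c \<ge> e + 1" using c_eq e1 by simp
      then have "(3::nat) ^ c \<ge> 3 ^ (e + 1)" by (rule power_increasing) simp
      moreover have "(3::nat) ^ e \<ge> 1" by simp
      ultimately have False using assms(4) nle unfolding c_def[symmetric] by simp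
      then show ?thesis ..
    qed
  qed
qed

end
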